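(* Reduction Rule 1 is safe: if \((G',k')\) is obtained from an instance \((G,k)\) of Vertex Cover by applying Reduction Rule 1, then \(k'+MM(G')-2LP(G')\leq k+MM(G)-2LP(G)\).
   Context: All graphs are finite, undirected and simple. An instance of Vertex Cover is a pair \((G,k)\), \(k\in\mathbb{N}\). \(MM(G)\) is the size of a maximum matching. \(LPVC(G)\) is the LP: minimize \(\sum_v x_v\) subject to \(x_u+x_v\ge1\) for each edge \(\{u,v\}\) and \(0\le x_v\le1\); \(LP(G)\) is its optimum value. For a half-integral solution \(x\) (values in \(\{0,\frac12,1\}\)), \(V_i^x=\{v: x_v=i\}\). Reduction Rule 1 (applied when the all-\(\frac12\) assignment is not the unique optimum of \(LPVC(G)\)): compute an optimal half-integral solution \(x\) to \(LPVC(G)\) such that the all-\(\frac12\) assignment is the unique optimum solution to \(LPVC(G[V_{1/2}^x])\), and set \(G'=G[V_{1/2}^x]\), \(k'=k-|V_1^x|\). *)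

theory Defs
  imports Complex_Main
begin

definition simple_graph :: "'a set \<Rightarrow> 'a set set \<Rightarrow> bool" where
  "simple_graph V E \<longleftrightarrow> finite V \<and>
     (\<forall>e\<in>E. \<exists>u v. e = {u, v} \<and> u \<noteq> v \<and> u \<in> V \<and> v \<in> V)"

definition is_matching :: "'a set set \<Rightarrow> 'a set set \<Rightarrow> bool" where
  "is_matching E M \<longleftrightarrow> M \<subseteq> E \<and> (\<forall>e1\<in>M. \<forall>e2\<in>M. e1 \<noteq> e2 \<longrightarrow> e1 \<inter> e2 = {})"

definition MM :: "'a set set \<Rightarrow> nat" where
  "MM E = Max (card ` {M. is_matching E M})"

definition lp_feasible :: "'a set \<Rightarrow> 'a set set \<Rightarrow> ('a \<Rightarrow> real) \<Rightarrow> bool" where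
  "lp_feasible V E x \<longleftrightarrow>
     (\<forall>u v. {u, v} \<in> E \<longrightarrow> x u + x v \<ge> 1) \<and> (\<forall>v\<in>V. 0 \<le> x v \<and> x v \<le> 1)"

definition LP :: "'a set \<Rightarrow> 'a set set \<Rightarrow> real" where
  "LP V E = Inf {sum x V | x. lp_feasible V E x}"

definition lp_optimal :: "'a set \<Rightarrow> 'a set set \<Rightarrow> ('a \<Rightarrow> real) \<Rightarrow> bool" where
  "lp_optimal V E x \<longleftrightarrow> lp_feasible V E x \<and>
     (\<forall>y. lp_feasible V E y \<longrightarrow> sum x V \<le> sum y V)"

definition half_unique_opt :: "'a set \<Rightarrow> 'a set set \<Rightarrow> bool" where
  "half_unique_opt V E \<longleftrightarrow> lp_optimal V E (\<lambda>_. 1/2) \<and>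
     (\<forall>y. lp_optimal V E y \<longrightarrow> (\<forall>v\<in>V. y v = 1/2))"

definition half_integral :: "'a set \<Rightarrow> ('a \<Rightarrow> real) \<Rightarrow> bool" where
  "half_integral V x \<longleftrightarrow> (\<forall>v\<in>V. x v \<in> {0, 1/2, 1})"

definition level_set :: "'a set \<Rightarrow> ('a \<Rightarrow> real) \<Rightarrow> real \<Rightarrow> 'a set" where
  "level_set V x i = {v\<in>V. x v = i}"

definition induced_edges :: "'a set set \<Rightarrow> 'a set \<Rightarrow> 'a set set" where
  "induced_edges E S = {e\<in>E. e \<subseteq> S}"

end

theory Submission imports Defs begin

lemma hall:
  assumes "finite A" "\<forall>a\<in>A. finite (N a)" "\<forall>S\<subseteq>A. card S \<le> card (\<Union>(N ` S))"
  shows "\<exists>f. inj_on f A \<and> (\<forall>a\<in>A. f a \<in> N a)"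
  using assms
proof (induction "card A" arbitrary: A N rule: less_induct)
  case less
  note fin = less.prems(1) and finN = less.prems(2) and cond = less.prems(3)
  have finU: "finite (\<Union>(N ` S))" if "S \<subseteq> A" for S
    using that fin finN by (meson finite_UN_I finite_subset subsetD)
  show ?case
  proof (cases "A = {}")
    case True then show ?thesis by auto
  next
    case nonempty: False
    show ?thesis
    proof (cases "\<exists>S. S \<subseteq> A \<and> S \<noteq> {} \<and> S \<noteq> A \<and> card S = card (\<Union>(N ` S))")
      case True
      then obtain S where S: "S \<subseteq> A" "S \<noteq> {}" "S \<noteq> A" "card S = card (\<Union>(N ` S))" by blast
      define U where "U = \<Union>(N ` S)"
      have finS: "finite S" using S fin finite_subset by blast
      have lt1: "card S < card A" using S(1,3) fin by (meson psubset_card_mono psubset_eq)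
      have f1: "\<forall>a\<in>S. finite (N a)" using finN S by auto
      have c1: "\<forall>T\<subseteq>S. card T \<le> card (\<Union>(N ` T))" using cond S by auto
      obtain g where g: "inj_on g S" "\<forall>a\<in>S. g a \<in> N a"
        using less.hyps[OF lt1 finS f1 c1] by blast
      have lt2: "card (A - S) < card A" using S fin
        by (intro psubset_card_mono) auto
      have c2: "\<forall>T\<subseteq>A - S. card T \<le> card (\<Union>((\<lambda>x. N x - U) ` T))"
      proof (intro allI impI)
        fix T assume T: "T \<subseteq> A - S"
        have eq: "\<Union>((\<lambda>x. N x - U) ` T) = \<Union>(N ` (T \<union> S)) - U" unfolding U_def by auto
        have sub: "U \<subseteq> \<Union>(N ` (T \<union> S))" unfolding U_def by auto
        have fTS: "finite (\<Union>(N ` (T \<union> S)))" using finU T S by auto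
        have "T \<union> S \<subseteq> A" using T S by auto
        then have c1: "card (T \<union> S) \<le> card (\<Union>(N ` (T \<union> S)))" using cond by blast
        have finT: "finite T" using T fin finite_subset by blast
        have "card (T \<union> S) = card T + card S" using T finT finS by (auto intro: card_Un_disjoint)
        moreover have "card (\<Union>(N ` (T \<union> S)) - U) = card (\<Union>(N ` (T \<union> S))) - card U"
          using sub fTS by (simp add: card_Diff_subset finite_subset)
        moreover have "card S = card U" unfolding U_def by (rule S(4))
        moreover have "card (\<Union>((\<lambda>x. N x - U) ` T)) = card (\<Union>(N ` (T \<union> S)) - U)"
          by (rule arg_cong[where f=card, OF eq])
        ultimately show "card T \<le> card (\<Union>((\<lambda>x. N x - U) ` T))"
          using c1 by linarith
      qed
      have f2: "\<forall>a\<in>A - S. finite (N a - U)" using finN by auto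
      have f3: "finite (A - S)" using fin by simp
      obtain h where h: "inj_on h (A - S)" "\<forall>a\<in>A - S. h a \<in> N a - U"
        using less.hyps[OF lt2 f3 f2 c2] by blast
      define f where "f = (\<lambda>x. if x \<in> S then g x else h x)"
      have "inj_on f A"
      proof (rule inj_onI)
        fix x y assume xy: "x \<in> A" "y \<in> A" "f x = f y"
        show "x = y"
        proof (cases "x \<in> S"; cases "y \<in> S")
          assume "x \<in> S" "y \<in> S" then show ?thesis using xy g(1) unfolding f_def inj_on_def by auto
        next
          assume "x \<notin> S" "y \<notin> S" then show ?thesis using xy h(1) unfolding f_def inj_on_def by auto
        next
          assume a1: "x \<in> S" "y \<notin> S"
          then have "g x \<in> U" using g(2) unfolding U_def by auto
          moreover have "h y \<notin> U" using h(2) a1 xy by auto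
          ultimately show ?thesis using xy a1 unfolding f_def by auto
        next
          assume a1: "x \<notin> S" "y \<in> S"
          then have "g y \<in> U" using g(2) unfolding U_def by auto
          moreover have "h x \<notin> U" using h(2) a1 xy by auto
          ultimately show ?thesis using xy a1 unfolding f_def by auto
        qed
      qed
      moreover have "\<forall>a\<in>A. f a \<in> N a" using g h unfolding f_def by auto
      ultimately show ?thesis by blast
    next
      case False
      have strict: "card T < card (\<Union>(N ` T))" if "T \<subseteq> A" "T \<noteq> {}" "T \<noteq> A" for T
        using False cond that by (meson le_neq_implies_less)
      obtain a where a: "a \<in> A" using nonempty by blast
      have "card {a} \<le> card (N a)" using cond[rule_format, of "{a}"] a by auto
      then have "N a \<noteq> {}" by auto
      then obtain b where b: "b \<in> N a" by blast
      have lt3: "card (A - {a}) < card A" using a fin by (meson card_Diff1_less)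
      have c3: "\<forall>T\<subseteq>A - {a}. card T \<le> card (\<Union>((\<lambda>x. N x - {b}) ` T))"
      proof (intro allI impI)
        fix T assume T: "T \<subseteq> A - {a}"
        show "card T \<le> card (\<Union>((\<lambda>x. N x - {b}) ` T))"
        proof (cases "T = {}")
          case True then show ?thesis by simp
        next
          case False
          have "T \<noteq> A" using T a by auto
          then have lt: "card T < card (\<Union>(N ` T))" using strict T False by auto
          have eq: "\<Union>((\<lambda>x. N x - {b}) ` T) = \<Union>(N ` T) - {b}" by auto
          have "card (\<Union>(N ` T) - {b}) \<ge> card (\<Union>(N ` T)) - 1"
            by (simp add: card_Diff_singleton_if)
          then show ?thesis unfolding eq using lt by linarith
        qed
      qed
      have f4: "\<forall>x\<in>A - {a}. finite (N x - {b})" using finN by auto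
      have f5: "finite (A - {a})" using fin by simp
      obtain h where h: "inj_on h (A - {a})" "\<forall>x\<in>A - {a}. h x \<in> N x - {b}"
        using less.hyps[OF lt3 f5 f4 c3] by blast
      define f where "f = h(a := b)"
      have "inj_on f A" 
      proof (rule inj_onI)
        fix x y assume xy: "x \<in> A" "y \<in> A" "f x = f y"
        show "x = y"
        proof (cases "x = a"; cases "y = a")
          assume "x \<noteq> a" "y \<noteq> a" then show ?thesis using xy h(1) unfolding f_def inj_on_def by auto
        next
          assume a1: "x = a" "y \<noteq> a" then have "h y \<noteq> b" using h(2) xy by auto
          then show ?thesis using xy a1 unfolding f_def by auto
        next
          assume a1: "x \<noteq> a" "y = a" then have "h x \<noteq> b" using h(2) xy by auto
          then show ?thesis using xy a1 unfolding f_def by auto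
        qed simp
      qed
      moreover have "\<forall>x\<in>A. f x \<in> N x" using h b unfolding f_def by auto
      ultimately show ?thesis by blast
    qed
  qed
qed

lemma LP_opt: assumes "lp_optimal V E y" shows "LP V E = sum y V"
  unfolding LP_def
proof (rule cInf_eq_minimum)
  show "sum y V \<in> {sum x V |x. lp_feasible V E x}" using assms unfolding lp_optimal_def by auto
next
  fix z assume "z \<in> {sum x V |x. lp_feasible V E x}"
  then show "sum y V \<le> z" using assms unfolding lp_optimal_def by auto
qed

lemma sum_half:
  assumes "finite V" "half_integral V x"
  shows "sum x V = card (level_set V x 1) + card (level_set V x (1/2)) / 2"
proof -
  let ?A = "level_set V x 0" and ?B = "level_set V x 1" and ?C = "level_set V x (1/2)"
  have V: "V = ?A \<union> (?B \<union> ?C)" using assms(2) unfolding half_integral_def level_set_def by auto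
  have fin: "finite ?A" "finite ?B" "finite ?C" using assms(1) unfolding level_set_def by auto
  have "sum x V = sum x ?A + (sum x ?B + sum x ?C)"
    by (subst V, subst sum.union_disjoint, use fin in \<open>auto simp: level_set_def\<close>,
        subst sum.union_disjoint, use fin in \<open>auto simp: level_set_def\<close>)
  moreover have "sum x ?A = 0" by (simp add: level_set_def)
  moreover have "sum x ?B = card ?B" by (simp add: level_set_def)
  moreover have "sum x ?C = card ?C / 2"
  proof -
    have "sum x ?C = sum (\<lambda>_. 1/2) ?C" by (rule sum.cong) (auto simp: level_set_def)
    then show ?thesis by simp
  qed
  ultimately show ?thesis by simp
qed

lemma edge_in:
  assumes "simple_graph V E" "{u, v} \<in> E" shows "u \<in> V" "v \<in> V" "u \<noteq> v"
  using assms unfolding simple_graph_def by (metis doubleton_eq_iff)+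

lemma hall_cond:
  assumes graph: "simple_graph V E" and x_opt: "lp_optimal V E x" and x_half: "half_integral V x"
    and S: "S \<subseteq> level_set V x 1"
  shows "card S \<le> card (\<Union>((\<lambda>v. {w \<in> level_set V x 0. {v, w} \<in> E}) ` S))"
proof (rule ccontr)
  define NS where "NS = \<Union>((\<lambda>v. {w \<in> level_set V x 0. {v, w} \<in> E}) ` S)"
  assume "\<not> card S \<le> card (\<Union>((\<lambda>v. {w \<in> level_set V x 0. {v, w} \<in> E}) ` S))"
  then have lt: "card NS < card S" unfolding NS_def by simp
  have finV: "finite V" using graph unfolding simple_graph_def by auto
  have SV: "S \<subseteq> V" and Sx: "\<And>w. w \<in> S \<Longrightarrow> x w = 1" using S unfolding level_set_def by auto
  have NSV: "NS \<subseteq> V" and NSx: "\<And>w. w \<in> NS \<Longrightarrow> x w = 0" unfolding NS_def level_set_def by auto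
  have NSI: "\<And>s w. s \<in> S \<Longrightarrow> w \<in> V \<Longrightarrow> x w = 0 \<Longrightarrow> {s, w} \<in> E \<Longrightarrow> w \<in> NS"
    unfolding NS_def level_set_def by auto
  have disj: "S \<inter> NS = {}" using Sx NSx by fastforce
  have finS: "finite S" "finite NS" using SV NSV finV finite_subset by auto
  define y where "y = (\<lambda>w. if w \<in> S \<union> NS then 1/2 else x w)"
  have feas: "lp_feasible V E x" using x_opt unfolding lp_optimal_def by auto
  have xv: "\<And>w. w \<in> V \<Longrightarrow> x w = 0 \<or> x w = 1/2 \<or> x w = 1" using x_half unfolding half_integral_def by auto
  have "lp_feasible V E y"
    unfolding lp_feasible_def
  proof (intro conjI allI impI ballI)
    fix u v assume e: "{u, v} \<in> E"
    have e': "{v, u} \<in> E" using e by (simp add: insert_commute)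
    have uv: "u \<in> V" "v \<in> V" using edge_in[OF graph e] by auto
    have x1: "x u + x v \<ge> 1" using feas e unfolding lp_feasible_def by auto
    have lo: "\<And>w. w \<in> V \<Longrightarrow> w \<notin> S \<Longrightarrow> y w \<ge> x w" unfolding y_def using NSx by auto
    show "y u + y v \<ge> 1"
    proof (cases "u \<in> S")
      case True
      have "y v \<ge> 1/2"
      proof (cases "v \<in> S \<union> NS")
        case False
        then have "x v \<noteq> 0" using NSI[OF True uv(2) _ e] by auto
        then show ?thesis using False xv[OF uv(2)] unfolding y_def by auto
      qed (simp add: y_def)
      then show ?thesis using True unfolding y_def by auto
    next
      case uS: False
      show ?thesis
      proof (cases "v \<in> S")
        case True
        have "y u \<ge> 1/2"
        proof (cases "u \<in> S \<union> NS")
          case False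
          then have "x u \<noteq> 0" using NSI[OF True uv(1) _ e'] by auto
          then show ?thesis using False xv[OF uv(1)] unfolding y_def by auto
        qed (simp add: y_def)
        then show ?thesis using True unfolding y_def by auto
      next
        case False
        then show ?thesis using lo[OF uv(1) uS] lo[OF uv(2) False] x1 by linarith
      qed
    qed
  next
    fix v assume "v \<in> V"
    then show "0 \<le> y v" "y v \<le> 1" using feas unfolding lp_feasible_def y_def by auto
  qed
  then have ge: "sum x V \<le> sum y V" using x_opt unfolding lp_optimal_def by auto
  define d where "d = (\<lambda>w. if w \<in> S then -1/2 else if w \<in> NS then 1/2 else (0::real))"
  have "\<And>w. y w = x w + d w" unfolding y_def d_def using Sx NSx disj by auto
  then have "sum y V = sum x V + sum d V" by (simp add: sum.distrib)
  moreover have "sum d V = sum d (S \<union> NS)"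
    by (rule sum.mono_neutral_right) (use finV SV NSV in \<open>auto simp: d_def\<close>)
  moreover have "sum d (S \<union> NS) = sum d S + sum d NS" using finS disj by (simp add: sum.union_disjoint)
  moreover have "sum d S = - card S / 2" unfolding d_def by simp
  moreover have "sum d NS = card NS / 2"
  proof -
    have "sum d NS = sum (\<lambda>_. 1/2) NS" by (rule sum.cong) (use disj in \<open>auto simp: d_def\<close>)
    then show ?thesis by simp
  qed
  ultimately have "sum y V < sum x V" using lt by simp
  then show False using ge by simp
qed

lemma matching_ext:
  assumes graph: "simple_graph V E"
    and f: "inj_on f V1" "\<forall>v\<in>V1. f v \<in> {w \<in> V0. {v, w} \<in> E}"
    and V1: "V1 = level_set V x 1" and V0: "V0 = level_set V x 0"
    and E'_def: "E' = induced_edges E (level_set V x (1/2))"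
  shows "MM E' + card V1 \<le> MM E"
proof -
  let ?Vh = "level_set V x (1/2)"
  have finV: "finite V" using graph unfolding simple_graph_def by auto
  have EV: "E \<subseteq> Pow V" using graph unfolding simple_graph_def by auto
  have finE: "finite E" using EV finV by (meson finite_Pow_iff finite_subset)
  have finM: "finite {M. is_matching E M}" 
    by (rule finite_subset[of _ "Pow E"]) (use finE in \<open>auto simp: is_matching_def\<close>)
  have E'E: "E' \<subseteq> E" unfolding E'_def induced_edges_def by auto
  have finM': "finite {M. is_matching E' M}"
    by (rule finite_subset[of _ "Pow E"]) (use finE E'E in \<open>auto simp: is_matching_def\<close>)
  have "{} \<in> {M. is_matching E' M}" by (simp add: is_matching_def)
  then have "MM E' \<in> card ` {M. is_matching E' M}" unfolding MM_def
    using finM' by (intro Max_in) auto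
  then obtain M' where M': "is_matching E' M'" "card M' = MM E'" by auto
  have M'sub: "\<And>e. e \<in> M' \<Longrightarrow> e \<subseteq> ?Vh \<and> e \<in> E" using M'(1) unfolding is_matching_def E'_def induced_edges_def by auto
  have finM'': "finite M'" using M'sub finE by (meson finite_subset subsetI)
  define g where "g = (\<lambda>v. {v, f v})"
  have x1: "\<And>v. v \<in> V1 \<Longrightarrow> x v = 1" and x0: "\<And>v. v \<in> V1 \<Longrightarrow> x (f v) = 0"
    using f(2) unfolding V1 V0 level_set_def by auto
  have fV: "\<And>v. v \<in> V1 \<Longrightarrow> f v \<in> V" using f(2) unfolding V0 level_set_def by auto
  have gE: "\<And>v. v \<in> V1 \<Longrightarrow> g v \<in> E" using f(2) unfolding g_def by auto
  have ginj: "inj_on g V1"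
  proof (rule inj_onI)
    fix v w assume vw: "v \<in> V1" "w \<in> V1" "g v = g w"
    then have "v \<in> {w, f w}" unfolding g_def by auto
    moreover have "v \<noteq> f w" using x1[OF vw(1)] x0[OF vw(2)] by auto
    ultimately show "v = w" by auto
  qed
  have gnot: "\<And>v. v \<in> V1 \<Longrightarrow> \<not> g v \<subseteq> ?Vh" using x1 unfolding g_def level_set_def by auto
  define M where "M = M' \<union> g ` V1"
  have finV1: "finite V1" using finV unfolding V1 level_set_def by auto
  have "is_matching E M"
    unfolding is_matching_def
  proof (intro conjI ballI impI)
    show "M \<subseteq> E" unfolding M_def using M'sub gE by auto
  next
    fix e1 e2 assume e: "e1 \<in> M" "e2 \<in> M" "e1 \<noteq> e2"
    have dis1: "e1 \<inter> e2 = {}" if "e1 \<in> M'" "e2 \<in> M'" "e1 \<noteq> e2" for e1 e2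
      using M'(1) that unfolding is_matching_def by auto
    have dis2: "e1 \<inter> e2 = {}" if t1: "e1 \<in> M'" and t2: "e2 \<in> g ` V1" for e1 e2
    proof -
      obtain v where v: "v \<in> V1" "e2 = {v, f v}" using t2 unfolding g_def by auto
      have "e1 \<subseteq> ?Vh" using M'sub t1 by auto
      then show ?thesis using v x1[OF v(1)] x0[OF v(1)] unfolding level_set_def by auto
    qed
    have dis3: "e1 \<inter> e2 = {}" if t1: "e1 \<in> g ` V1" and t2: "e2 \<in> g ` V1" and t3: "e1 \<noteq> e2" for e1 e2
    proof -
      obtain v where v: "v \<in> V1" "e1 = {v, f v}" using t1 unfolding g_def by auto
      obtain w where w: "w \<in> V1" "e2 = {w, f w}" using t2 unfolding g_def by auto
      have "v \<noteq> w" using v w t3 by auto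
      then have "f v \<noteq> f w" using f(1) v w unfolding inj_on_def by auto
      then show ?thesis using v w \<open>v \<noteq> w\<close> x1[OF v(1)] x0[OF v(1)] x1[OF w(1)] x0[OF w(1)] by auto
    qed
    show "e1 \<inter> e2 = {}" using e dis1 dis2 dis3 unfolding M_def by (metis Int_commute Un_iff)
  qed
  then have "card M \<le> MM E" unfolding MM_def using finM by (intro Max_ge) auto
  moreover have "card M = card M' + card V1"
  proof -
    have "M' \<inter> g ` V1 = {}" using M'sub gnot by blast
    then have "card M = card M' + card (g ` V1)" unfolding M_def using finM'' finV1
      by (simp add: card_Un_disjoint)
    also have "card (g ` V1) = card V1" using ginj by (simp add: card_image)
    finally show ?thesis .
  qed
  ultimately show ?thesis using M'(2) by simp
qed

theorem lemma7:
  fixes V :: "'a set" and E :: "'a set set" and k :: nat and x :: "'a \<Rightarrow> real"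
    and V' :: "'a set" and E' :: "'a set set" and k' :: int
  assumes graph: "simple_graph V E"
    and applicable: "\<not> half_unique_opt V E"
    and x_opt: "lp_optimal V E x"
    and x_half: "half_integral V x"
    and V'_def: "V' = level_set V x (1/2)"
    and E'_def: "E' = induced_edges E V'"
    and x_rest: "half_unique_opt V' E'"
    and k'_def: "k' = int k - int (card (level_set V x 1))"
  shows "real_of_int k' + real (MM E') - 2 * LP V' E' \<le> real k + real (MM E) - 2 * LP V E"
proof -
  have finV: "finite V" using graph unfolding simple_graph_def by auto
  have L1: "LP V E = card (level_set V x 1) + card V' / 2"
    using LP_opt[OF x_opt] sum_half[OF finV x_half] V'_def by simp
  have L2: "LP V' E' = card V' / 2"
    using LP_opt[of V' E' "\<lambda>_. 1/2"] x_rest unfolding half_unique_opt_def by simp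
  have finV1: "finite (level_set V x 1)" using finV unfolding level_set_def by auto
  have "\<exists>f. inj_on f (level_set V x 1) \<and>
      (\<forall>a\<in>level_set V x 1. f a \<in> {w \<in> level_set V x 0. {a, w} \<in> E})"
  proof (rule hall[OF finV1])
    show "\<forall>a\<in>level_set V x 1. finite {w \<in> level_set V x 0. {a, w} \<in> E}"
      using finV unfolding level_set_def by auto
    show "\<forall>S\<subseteq>level_set V x 1. card S \<le> card (\<Union>((\<lambda>a. {w \<in> level_set V x 0. {a, w} \<in> E}) ` S))"
      using hall_cond[OF graph x_opt x_half] by blast
  qed
  then obtain f where f: "inj_on f (level_set V x 1)"
      "\<forall>a\<in>level_set V x 1. f a \<in> {w \<in> level_set V x 0. {a, w} \<in> E}" by blast
  have "MM E' + card (level_set V x 1) \<le> MM E"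
    by (rule matching_ext[OF graph f refl refl]) (simp add: E'_def V'_def)
  then have "real (MM E') + real (card (level_set V x 1)) \<le> real (MM E)" by linarith
  then show ?thesis using L1 L2 k'_def by simp
qed

end
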